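(* Let $\mu$ be a Borel probability measure on $\mathbb{R}$ satisfying Assumption A (see context), let $t>1$, and let $E$ be a zero of $m_\mu$. Then there exists a constant $M>0$ such that $\mathrm{dist}(\omega_t(z),E)\ge M$ for all $z\in\mathbb{R}$.
   Context: Assumption A: $n_{\mathrm{ac}},n_{\mathrm{pp}},n^{\mathrm{out}}_{\mathrm{pp}}\ge1$ integers; $\mu$ is a compactly supported Borel probability measure on $\mathbb{R}$ whose singular part is supported on a finite set $\{x_1,\dots,x_{n_{\mathrm{pp}}}\}$, whose absolutely continuous part $\mu_{\mathrm{ac}}$ is supported on $n_{\mathrm{ac}}$ intervals $[E_j^-,E_j^+]$, with exactly $n^{\mathrm{out}}_{\mathrm{pp}}$ atoms outside $\mathrm{supp}(\mu_{\mathrm{ac}})$, no atom at the endpoints $E_j^\pm$, and density $\rho$ with $C_j^{-1}<\rho(x)/\big((x-E_j^-)^{t_j^-}(E_j^+-x)^{t_j^+}\big)<C_j$ a.e. on $[E_j^-,E_j^+]$ for some $-1<t_j^\pm<1$, $C_j\ge1$. $m_\mu(z)=\int\frac{1}{x-z}\mu(dx)$ (a zero of $m_\mu$ is a real point $E$ where $m_\mu(E)=0$), $F_\mu=-1/m_\mu$. $\omega_t:\mathbb{C}^+\to\mathbb{C}^+$ is the analytic subordination function with $\mathrm{Im}\,\omega_t(z)\ge\mathrm{Im}\,z$, $\omega_t(i\eta)/(i\eta)\to1$, $t\omega_t(z)-z=(t-1)F_\mu(\omega_t(z))$, extended continuously to $\mathbb{C}^+\cup\mathbb{R}$ (values in $\mathbb{C}^+\cup\mathbb{R}\cup\{\infty\}$).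 *)

theory Defs
  imports "HOL-Probability.Probability"
begin

definition upper_half :: "complex set" where
  "upper_half = {z. 0 < Im z}"

definition stieltjes :: "real measure \<Rightarrow> complex \<Rightarrow> complex" where
  "stieltjes \<mu> z = (\<integral>x. 1 / (complex_of_real x - z) \<partial>\<mu>)"

definition F_transform :: "real measure \<Rightarrow> complex \<Rightarrow> complex" where
  "F_transform \<mu> z = - 1 / stieltjes \<mu> z"

text \<open>A (real) zero of m_mu: its boundary value at E (vertical limit from the
  upper half plane, which equals the integral when E is off the support) is 0.\<close>
definition stieltjes_zero :: "real measure \<Rightarrow> real \<Rightarrow> bool" where
  "stieltjes_zero \<mu> E \<longleftrightarrow>
     ((\<lambda>\<eta>::real. stieltjes \<mu> (complex_of_real E + \<i> * complex_of_real \<eta>)) \<longlongrightarrow> 0) (at_right 0)"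

definition assumptionA :: "real measure \<Rightarrow> nat \<Rightarrow> nat \<Rightarrow> nat \<Rightarrow> bool" where
  "assumptionA \<mu> nac npp nppout \<longleftrightarrow>
     1 \<le> nac \<and> 1 \<le> npp \<and> 1 \<le> nppout \<and>
     prob_space \<mu> \<and> sets \<mu> = sets borel \<and>
     (\<exists>K. compact K \<and> emeasure \<mu> (UNIV - K) = 0) \<and>
     (\<exists>(\<rho>::real \<Rightarrow> real) (X::real set) (p::real \<Rightarrow> real)
        (Em::nat \<Rightarrow> real) (Ep::nat \<Rightarrow> real) (tm::nat \<Rightarrow> real) (tp::nat \<Rightarrow> real) (C::nat \<Rightarrow> real).
        \<rho> \<in> borel_measurable borel \<and> (\<forall>x. 0 \<le> \<rho> x) \<and>
        finite X \<and> card X = npp \<and> (\<forall>x\<in>X. 0 < p x) \<and>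
        (\<forall>A\<in>sets borel. emeasure \<mu> A =
            (\<integral>\<^sup>+x. ennreal (\<rho> x) * indicator A x \<partial>lborel)
            + (\<Sum>x\<in>X. ennreal (p x) * indicator A x)) \<and>
        (\<forall>j<nac. Em j < Ep j) \<and>
        (\<forall>j. Suc j < nac \<longrightarrow> Ep j < Em (Suc j)) \<and>
        (\<forall>x. x \<notin> (\<Union>j<nac. {Em j..Ep j}) \<longrightarrow> \<rho> x = 0) \<and>
        card (X - (\<Union>j<nac. {Em j..Ep j})) = nppout \<and>
        (\<forall>j<nac. Em j \<notin> X \<and> Ep j \<notin> X) \<and>
        (\<forall>j<nac. -1 < tm j \<and> tm j < 1 \<and> -1 < tp j \<and> tp j < 1 \<and> 1 \<le> C j \<and>
           (AE x in lborel. x \<in> {Em j..Ep j} \<longrightarrow>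
              1 / C j < \<rho> x / ((x - Em j) powr tm j * (Ep j - x) powr tp j) \<and>
              \<rho> x / ((x - Em j) powr tm j * (Ep j - x) powr tp j) < C j)))"

text \<open>omega is the subordination function of mu^{boxplus t} on the upper half plane.\<close>
definition is_subordination :: "real measure \<Rightarrow> real \<Rightarrow> (complex \<Rightarrow> complex) \<Rightarrow> bool" where
  "is_subordination \<mu> t \<omega> \<longleftrightarrow>
     \<omega> holomorphic_on upper_half \<and>
     (\<forall>z\<in>upper_half. \<omega> z \<in> upper_half \<and> Im z \<le> Im (\<omega> z)) \<and>
     ((\<lambda>\<eta>::real. \<omega> (\<i> * complex_of_real \<eta>) / (\<i> * complex_of_real \<eta>)) \<longlongrightarrow> 1) at_top \<and>
     (\<forall>z\<in>upper_half. complex_of_real t * \<omega> z - z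
                        = complex_of_real (t - 1) * F_transform \<mu> (\<omega> z))"

end

theory Submission
  imports Defs
begin

lemma meas_sets:
  assumes "sets M = sets borel" "f \<in> borel_measurable borel"
  shows "f \<in> borel_measurable M"
  using assms measurable_cong_sets[OF assms(1) refl] by simp

lemma amgm_pt:
  fixes a b s :: real
  assumes "s > 0"
  shows "a * b \<le> (s * a^2 + b^2 / s) / 2"
proof -
  have "0 \<le> (s*a - b)^2" by simp
  then have "2 * s * (a*b) \<le> s^2 * a^2 + b^2" by (simp add: power2_eq_square algebra_simps)
  then show ?thesis using assms by (simp add: field_simps power2_eq_square)
qed

lemma CS_real:
  fixes a b :: "'a \<Rightarrow> real"
  assumes i1: "integrable M (\<lambda>x. a x * b x)" and i2: "integrable M (\<lambda>x. (a x)^2)"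
    and i3: "integrable M (\<lambda>x. (b x)^2)"
    and nn: "\<And>x. 0 \<le> a x * b x"
    and A: "0 < (\<integral>x. (a x)^2 \<partial>M)" and B: "0 < (\<integral>x. (b x)^2 \<partial>M)"
  shows "(\<integral>x. a x * b x \<partial>M)^2 \<le> (\<integral>x. (a x)^2 \<partial>M) * (\<integral>x. (b x)^2 \<partial>M)"
proof -
  define AA where "AA = (\<integral>x. (a x)^2 \<partial>M)"
  define BB where "BB = (\<integral>x. (b x)^2 \<partial>M)"
  define s where "s = sqrt (BB / AA)"
  have s0: "s > 0" using A B by (simp add: s_def AA_def BB_def)
  have "(\<integral>x. a x * b x \<partial>M) \<le> (\<integral>x. (s * (a x)^2 + (b x)^2 / s) / 2 \<partial>M)"
    by (rule integral_mono) (use i1 i2 i3 amgm_pt[OF s0] in auto)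
  also have "\<dots> = (s * AA + BB / s) / 2"
    using i2 i3 by (simp add: AA_def BB_def)
  also have "s * AA = sqrt (AA * BB)" using A B
    by (simp add: s_def AA_def BB_def real_sqrt_divide field_simps real_sqrt_mult)
  also have "BB / s = sqrt (AA * BB)" using A B
    by (simp add: s_def AA_def BB_def real_sqrt_divide field_simps real_sqrt_mult)
  finally have le: "(\<integral>x. a x * b x \<partial>M) \<le> sqrt (AA * BB)" by simp
  have ge: "0 \<le> (\<integral>x. a x * b x \<partial>M)" using nn by (simp add: integral_nonneg_AE)
  have "(\<integral>x. a x * b x \<partial>M)^2 \<le> (sqrt (AA * BB))^2"
    using le ge by (simp add: power_mono)
  also have "\<dots> = AA * BB" using A B by (simp add: AA_def BB_def)
  finally show ?thesis by (simp add: AA_def BB_def)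
qed

lemma bnd_int:
  fixes f :: "real \<Rightarrow> 'b::{banach,second_countable_topology}"
  assumes ps: "prob_space \<mu>" and sb: "sets \<mu> = sets borel"
    and m: "f \<in> borel_measurable borel" and b: "\<And>x. norm (f x) \<le> B"
  shows "integrable \<mu> f"
proof -
  interpret prob_space \<mu> by (rule ps)
  show ?thesis
    by (rule integrable_const_bound[where B=B]) (use b meas_sets[OF sb m] in auto)
qed

lemma Im_le_cmod_sub:
  assumes "0 < Im w"
  shows "Im w \<le> cmod (complex_of_real x - w)"
  using abs_Im_le_cmod[of "complex_of_real x - w"] assms by simp

lemma stj_basic:
  assumes ps: "prob_space \<mu>" and sb: "sets \<mu> = sets borel" and w: "0 < Im w"
  shows "integrable \<mu> (\<lambda>x. 1 / (complex_of_real x - w))"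
    and "integrable \<mu> (\<lambda>x. 1 / (cmod (complex_of_real x - w))^2)"
    and "Im (stieltjes \<mu> w) = Im w * (\<integral>x. 1 / (cmod (complex_of_real x - w))^2 \<partial>\<mu>)"
proof -
  have pos: "0 < cmod (complex_of_real x - w)" for x
    using Im_le_cmod_sub[OF w, of x] w by linarith
  show i1: "integrable \<mu> (\<lambda>x. 1 / (complex_of_real x - w))"
  proof (rule bnd_int[OF ps sb, where B="1 / Im w"])
    show "(\<lambda>x. 1 / (complex_of_real x - w)) \<in> borel_measurable borel" by measurable
    fix x show "norm (1 / (complex_of_real x - w)) \<le> 1 / Im w"
      using Im_le_cmod_sub[OF w, of x] w by (simp add: norm_divide frac_le)
  qed
  show i2: "integrable \<mu> (\<lambda>x. 1 / (cmod (complex_of_real x - w))^2)"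
  proof (rule bnd_int[OF ps sb, where B="1 / (Im w)^2"])
    show "(\<lambda>x. 1 / (cmod (complex_of_real x - w))^2) \<in> borel_measurable borel" by measurable
    fix x show "norm (1 / (cmod (complex_of_real x - w))^2) \<le> 1 / (Im w)^2"
      using Im_le_cmod_sub[OF w, of x] w by (simp add: frac_le power_mono)
  qed
  have pt: "Im (1 / (complex_of_real x - w)) = Im w * (1 / (cmod (complex_of_real x - w))^2)" for x
  proof -
    have h: "(cmod (complex_of_real x - w))^2 = (x - Re w)^2 + (Im w)^2"
      by (simp add: cmod_power2)
    show ?thesis by (simp add: Im_divide h)
  qed
  have "Im (stieltjes \<mu> w) = (\<integral>x. Im (1 / (complex_of_real x - w)) \<partial>\<mu>)"
    unfolding stieltjes_def using i1 by simp
  also have "\<dots> = (\<integral>x. Im w * (1 / (cmod (complex_of_real x - w))^2) \<partial>\<mu>)"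
    by (simp only: pt)
  also have "\<dots> = Im w * (\<integral>x. 1 / (cmod (complex_of_real x - w))^2 \<partial>\<mu>)"
    by (rule integral_mult_right_zero)
  finally show "Im (stieltjes \<mu> w) = Im w * (\<integral>x. 1 / (cmod (complex_of_real x - w))^2 \<partial>\<mu>)" .
qed

lemma pos_int:
  fixes f :: "'a \<Rightarrow> real"
  assumes ps: "prob_space M" and i: "integrable M f" and p: "\<And>x. 0 < f x"
  shows "0 < integral\<^sup>L M f"
proof -
  have ge: "0 \<le> integral\<^sup>L M f" using p by (simp add: integral_nonneg_AE less_imp_le)
  have "integral\<^sup>L M f \<noteq> 0"
  proof
    assume "integral\<^sup>L M f = 0"
    then have "AE x in M. f x = 0"
      using integral_nonneg_eq_0_iff_AE[OF i] p by (simp add: less_imp_le)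
    then have "AE x in M. False" using p by (auto elim: AE_mp simp: less_imp_neq[symmetric])
    then show False using ps by (simp add: prob_space.AE_False)
  qed
  then show ?thesis using ge by simp
qed

lemma nz_sub: "0 < Im v \<Longrightarrow> complex_of_real x - v \<noteq> 0"
  by (metis Im_complex_of_real less_irrefl right_minus_eq)

lemma key_est:
  assumes ps: "prob_space \<mu>" and sb: "sets \<mu> = sets borel" and w: "0 < Im w" and eta: "0 < \<eta>"
    and e: "cmod (stieltjes \<mu> (complex_of_real E + \<i> * complex_of_real \<eta>)) \<le> \<epsilon>"
    and d: "cmod (w - complex_of_real E) < \<eta>"
  shows "(cmod (stieltjes \<mu> w))^2
           \<le> 2*\<epsilon>^2 + 8*\<eta>*\<epsilon>*(\<integral>x. 1/(cmod (complex_of_real x - w))^2 \<partial>\<mu>)"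
proof -
  define w0 where "w0 = complex_of_real E + \<i> * complex_of_real \<eta>"
  have w0: "0 < Im w0" using eta by (simp add: w0_def)
  have Imw0: "Im w0 = \<eta>" by (simp add: w0_def)
  define J where "J = (\<lambda>v. \<integral>x. 1/(cmod (complex_of_real x - v))^2 \<partial>\<mu>)"
  define a where "a = (\<lambda>x::real. 1 / cmod (complex_of_real x - w))"
  define b where "b = (\<lambda>x::real. 1 / cmod (complex_of_real x - w0))"
  define P where "P = (\<lambda>x::real. 1/(complex_of_real x - w) * (1/(complex_of_real x - w0)))"
  have iP: "integrable \<mu> P"
  proof (rule bnd_int[OF ps sb, where B="1 / Im w * (1 / Im w0)"])
    show "P \<in> borel_measurable borel" unfolding P_def by measurable
    fix x
    have "1 / cmod (complex_of_real x - w) \<le> 1 / Im w"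
      using Im_le_cmod_sub[OF w, of x] w by (simp add: frac_le)
    moreover have "1 / cmod (complex_of_real x - w0) \<le> 1 / Im w0"
      using Im_le_cmod_sub[OF w0, of x] w0 by (simp add: frac_le)
    ultimately have "1 / cmod (complex_of_real x - w) * (1 / cmod (complex_of_real x - w0))
        \<le> 1 / Im w * (1 / Im w0)"
      by (intro mult_mono) (use w in auto)
    then show "norm (P x) \<le> 1 / Im w * (1 / Im w0)"
      by (simp only: P_def norm_mult norm_divide norm_one)
  qed
  have iab: "integrable \<mu> (\<lambda>x. a x * b x)"
  proof (rule bnd_int[OF ps sb, where B="1 / Im w * (1 / Im w0)"])
    show "(\<lambda>x. a x * b x) \<in> borel_measurable borel" unfolding a_def b_def by measurable
    fix x
    have "1 / cmod (complex_of_real x - w) \<le> 1 / Im w"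
      using Im_le_cmod_sub[OF w, of x] w by (simp add: frac_le)
    moreover have "1 / cmod (complex_of_real x - w0) \<le> 1 / Im w0"
      using Im_le_cmod_sub[OF w0, of x] w0 by (simp add: frac_le)
    ultimately have "1 / cmod (complex_of_real x - w) * (1 / cmod (complex_of_real x - w0))
        \<le> 1 / Im w * (1 / Im w0)"
      by (intro mult_mono) (use w in auto)
    then show "norm (a x * b x) \<le> 1 / Im w * (1 / Im w0)"
      unfolding a_def b_def by simp
  qed
  have diff: "stieltjes \<mu> w - stieltjes \<mu> w0 = (w - w0) * integral\<^sup>L \<mu> P"
  proof -
    have "stieltjes \<mu> w - stieltjes \<mu> w0
        = (\<integral>x. 1/(complex_of_real x - w) - 1/(complex_of_real x - w0) \<partial>\<mu>)"
      unfolding stieltjes_def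
      using Bochner_Integration.integral_diff[OF stj_basic(1)[OF ps sb w] stj_basic(1)[OF ps sb w0]] by simp
    also have "\<dots> = (\<integral>x. (w - w0) * P x \<partial>\<mu>)"
    proof (rule Bochner_Integration.integral_cong[OF refl])
      fix x
      have "complex_of_real x - w \<noteq> 0" "complex_of_real x - w0 \<noteq> 0"
        using nz_sub[OF w] nz_sub[OF w0] by auto
      then show "1/(complex_of_real x - w) - 1/(complex_of_real x - w0) = (w - w0) * P x"
        unfolding P_def by (simp add: field_simps)
    qed
    also have "\<dots> = (w - w0) * integral\<^sup>L \<mu> P" by (rule integral_mult_right_zero)
    finally show ?thesis .
  qed
  have nb: "cmod (integral\<^sup>L \<mu> P) \<le> (\<integral>x. a x * b x \<partial>\<mu>)"
  proof -
    have "cmod (integral\<^sup>L \<mu> P) \<le> (\<integral>x. norm (P x) \<partial>\<mu>)" by (rule integral_norm_bound)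
    also have "\<dots> = (\<integral>x. a x * b x \<partial>\<mu>)"
      unfolding P_def a_def b_def by (simp add: norm_mult norm_divide)
    finally show ?thesis .
  qed
  have a2: "(\<lambda>x. (a x)^2) = (\<lambda>x. 1/(cmod (complex_of_real x - w))^2)"
    by (simp add: a_def power_one_over)
  have b2: "(\<lambda>x. (b x)^2) = (\<lambda>x. 1/(cmod (complex_of_real x - w0))^2)"
    by (simp add: b_def power_one_over)
  have Jpos: "0 < J v" if v: "0 < Im v" for v
    unfolding J_def
  proof (rule pos_int[OF ps stj_basic(2)[OF ps sb v]])
    fix x show "0 < 1/(cmod (complex_of_real x - v))^2" using nz_sub[OF v, of x] by simp
  qed
  have CS: "(\<integral>x. a x * b x \<partial>\<mu>)^2 \<le> J w * J w0"
    using CS_real[OF iab] unfolding a2 b2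
    using stj_basic(2)[OF ps sb w] stj_basic(2)[OF ps sb w0] Jpos[OF w] Jpos[OF w0]
    by (simp add: J_def a_def b_def)
  have Jw0: "J w0 \<le> \<epsilon> / \<eta>"
  proof -
    have "\<eta> * J w0 = Im (stieltjes \<mu> w0)" using stj_basic(3)[OF ps sb w0] by (simp add: J_def Imw0)
    also have "\<dots> \<le> cmod (stieltjes \<mu> w0)" using abs_Im_le_cmod by (rule order_trans[OF abs_ge_self])
    also have "\<dots> \<le> \<epsilon>" using e by (simp add: w0_def)
    finally show ?thesis using eta by (simp add: field_simps)
  qed
  have dw: "cmod (w - w0) \<le> 2 * \<eta>"
  proof -
    have "w - w0 = (w - complex_of_real E) - \<i> * complex_of_real \<eta>" by (simp add: w0_def)
    then have "cmod (w - w0) \<le> cmod (w - complex_of_real E) + cmod (\<i> * complex_of_real \<eta>)"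
      by (metis norm_triangle_ineq4)
    then show ?thesis using d eta by (simp add: norm_mult)
  qed
  define q where "q = cmod (stieltjes \<mu> w - stieltjes \<mu> w0)"
  define p where "p = cmod (stieltjes \<mu> w0)"
  have q2: "q^2 \<le> 4*\<eta>*\<epsilon>*J w"
  proof -
    have "q = cmod (w - w0) * cmod (integral\<^sup>L \<mu> P)" unfolding q_def diff by (simp add: norm_mult)
    then have "q^2 = (cmod (w - w0))^2 * (cmod (integral\<^sup>L \<mu> P))^2" by (simp add: power_mult_distrib)
    also have "\<dots> \<le> (2*\<eta>)^2 * (\<integral>x. a x * b x \<partial>\<mu>)^2"
    proof -
      have h1: "(cmod (w - w0))^2 \<le> (2*\<eta>)^2" by (rule power_mono[OF dw]) simp
      have h2: "(cmod (integral\<^sup>L \<mu> P))^2 \<le> (\<integral>x. a x * b x \<partial>\<mu>)^2"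
        by (rule power_mono[OF nb]) simp
      show ?thesis by (rule mult_mono[OF h1 h2]) auto
    qed
    also have "\<dots> \<le> (2*\<eta>)^2 * (J w * J w0)"
      by (rule mult_left_mono[OF CS]) simp
    also have "\<dots> \<le> (2*\<eta>)^2 * (J w * (\<epsilon> / \<eta>))"
      by (rule mult_left_mono[OF mult_left_mono[OF Jw0]]) (use Jpos[OF w] in auto)
    also have "\<dots> = 4*\<eta>*\<epsilon>*J w" using eta by (simp add: field_simps power2_eq_square)
    finally show ?thesis .
  qed
  have tri: "cmod (stieltjes \<mu> w) \<le> p + q" unfolding p_def q_def
    by (metis add.commute norm_triangle_ineq4 diff_add_cancel norm_triangle_ineq)
  have "(cmod (stieltjes \<mu> w))^2 \<le> (p + q)^2"
    by (rule power_mono[OF tri]) simp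
  also have "\<dots> \<le> 2*p^2 + 2*q^2"
  proof -
    have "0 \<le> (p - q)^2" by simp
    then show ?thesis unfolding power2_sum power2_diff by linarith
  qed
  also have "\<dots> \<le> 2*\<epsilon>^2 + 8*\<eta>*\<epsilon>*J w"
  proof -
    have "p^2 \<le> \<epsilon>^2" using e by (simp add: p_def w0_def power_mono)
    then show ?thesis using q2 by simp
  qed
  finally show ?thesis by (simp add: J_def)
qed

lemma sub_ineq:
  assumes t: "1 < t" and w: "0 < Im w" and z: "0 < Im z"
    and eq: "complex_of_real t * w - z = complex_of_real (t - 1) * F_transform \<mu> w"
    and Imm: "Im (stieltjes \<mu> w) = Im w * J" and J: "0 < J"
  shows "J \<le> t / (t - 1) * (cmod (stieltjes \<mu> w))^2"
proof -
  define m where "m = stieltjes \<mu> w"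
  define N where "N = (cmod m)^2"
  have Imp: "0 < Im m" using Imm w J by (simp add: m_def)
  then have "m \<noteq> 0" by auto
  then have N: "0 < N" by (simp add: N_def)
  have N2: "N = (Re m)^2 + (Im m)^2" by (simp add: N_def cmod_power2)
  have imF: "Im (F_transform \<mu> w) = Im m / N"
    unfolding F_transform_def m_def[symmetric] N2 by (simp add: Im_divide)
  have "t * Im w - Im z = (t - 1) * (Im w * J / N)"
    using arg_cong[OF eq, of Im] imF Imm by (simp add: m_def)
  then have "(t - 1) * (Im w * J / N) < t * Im w" using z by linarith
  then have "(t - 1) * (Im w * J) < t * Im w * N" using N by (simp add: field_simps)
  then have "Im w * ((t - 1) * J) < Im w * (t * N)" by (simp add: algebra_simps)
  then have "(t - 1) * J < t * N" using w by simp
  then have "J < t * N / (t - 1)" using t by (simp add: field_simps)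
  then show ?thesis by (simp add: N_def m_def)
qed

theorem lemma3p1:
  fixes \<mu> :: "real measure" and nac npp nppout :: nat
    and t E :: real and \<omega> :: "complex \<Rightarrow> complex"
  assumes "assumptionA \<mu> nac npp nppout"
    and "1 < t"
    and "stieltjes_zero \<mu> E"
    and "is_subordination \<mu> t \<omega>"
  shows "\<exists>M>0. \<forall>x::real. \<forall>L::complex.
           (\<omega> \<longlongrightarrow> L) (at (complex_of_real x) within upper_half)
             \<longrightarrow> M \<le> cmod (L - complex_of_real E)"
proof -
  have ps: "prob_space \<mu>" and sb: "sets \<mu> = sets borel"
    using assms(1) unfolding assumptionA_def by auto
  obtain Kc where Kc: "compact Kc" "emeasure \<mu> (UNIV - Kc) = 0"
    using assms(1) unfolding assumptionA_def by auto
  obtain R where R: "\<And>x. x \<in> Kc \<Longrightarrow> \<bar>x\<bar> \<le> R"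
    using compact_imp_bounded[OF Kc(1)] unfolding bounded_iff by auto
  have AEK: "AE x in \<mu>. x \<in> Kc"
  proof (rule AE_I[where N="UNIV - Kc"])
    show "{x \<in> space \<mu>. x \<notin> Kc} \<subseteq> UNIV - Kc" by auto
    show "emeasure \<mu> (UNIV - Kc) = 0" by (rule Kc(2))
    show "UNIV - Kc \<in> sets \<mu>" unfolding sb
      by (simp add: borel_open open_Diff compact_imp_closed Kc(1))
  qed
  define J where "J = (\<lambda>v. \<integral>x. 1/(cmod (complex_of_real x - v))^2 \<partial>\<mu>)"
  define D where "D = \<bar>R\<bar> + \<bar>E\<bar> + 1"
  have D: "0 < D" by (simp add: D_def add_nonneg_pos)
  define c0 where "c0 = 1 / D^2"
  have c0: "0 < c0" using D by (simp add: c0_def)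
  have Jlow: "c0 \<le> J w" if w: "0 < Im w" and wE: "cmod (w - complex_of_real E) < 1" for w
  proof -
    have "(\<integral>x. c0 \<partial>\<mu>) \<le> J w"
      unfolding J_def
    proof (rule integral_mono_AE)
      show "integrable \<mu> (\<lambda>x. c0)" using ps by (simp add: prob_space.finite_measure finite_measure.integrable_const)
      show "integrable \<mu> (\<lambda>x. 1/(cmod (complex_of_real x - w))^2)" by (rule stj_basic(2)[OF ps sb w])
      show "AE x in \<mu>. c0 \<le> 1/(cmod (complex_of_real x - w))^2"
        using AEK
      proof (rule AE_mp, intro AE_I2 impI)
        fix x assume x: "x \<in> Kc"
        have pos: "0 < cmod (complex_of_real x - w)"
          using Im_le_cmod_sub[OF w, of x] w by linarith
        have "cmod w \<le> cmod (complex_of_real E) + cmod (w - complex_of_real E)"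
          by (metis add.commute diff_add_cancel norm_triangle_ineq)
        then have cw: "cmod w < \<bar>E\<bar> + 1" using wE by simp
        have "cmod (complex_of_real x - w) \<le> cmod (complex_of_real x) + cmod w"
          by (rule norm_triangle_ineq4)
        then have "cmod (complex_of_real x - w) \<le> D"
          using cw R[OF x] by (simp add: D_def)
        then have "(cmod (complex_of_real x - w))^2 \<le> D^2"
          using pos by (simp add: power_mono)
        then show "c0 \<le> 1/(cmod (complex_of_real x - w))^2"
          unfolding c0_def using pos by (simp add: frac_le)
      qed
    qed
    moreover have "(\<integral>x. c0 \<partial>\<mu>) = c0" using prob_space.prob_space[OF ps] by simp
    ultimately show ?thesis by auto
  qed
  define K where "K = t / (t - 1)"
  have K: "0 < K" using assms(2) by (simp add: K_def)
  define \<epsilon> where "\<epsilon> = min 1 (c0 / (8 * K))"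
  have e0: "0 < \<epsilon>" using c0 K by (simp add: \<epsilon>_def)
  have e1: "\<epsilon> \<le> 1" by (simp add: \<epsilon>_def)
  have e2: "\<epsilon> \<le> c0 / (8 * K)" by (simp add: \<epsilon>_def)
  have "eventually (\<lambda>\<eta>. dist (stieltjes \<mu> (complex_of_real E + \<i> * complex_of_real \<eta>)) 0 < \<epsilon>) (at_right (0::real))"
    using assms(3) e0 unfolding stieltjes_zero_def tendsto_iff by blast
  then obtain b where b: "b > 0"
    and bb: "\<And>y. 0 < y \<Longrightarrow> y < b \<Longrightarrow> cmod (stieltjes \<mu> (complex_of_real E + \<i> * complex_of_real y)) < \<epsilon>"
    unfolding eventually_at_right_field by auto
  define \<eta> where "\<eta> = min (b/2) (min 1 (1 / (16 * K * \<epsilon>)))"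
  have eta0: "0 < \<eta>" using b K e0 by (simp add: \<eta>_def)
  have etab: "\<eta> < b" using b by (simp add: \<eta>_def)
  have eta1: "\<eta> \<le> 1" by (simp add: \<eta>_def)
  have eta2: "\<eta> \<le> 1 / (16 * K * \<epsilon>)" by (simp add: \<eta>_def)
  have small: "8 * K * \<eta> * \<epsilon> \<le> 1/2"
  proof -
    have "8 * K * \<epsilon> * \<eta> \<le> 8 * K * \<epsilon> * (1 / (16 * K * \<epsilon>))"
      using eta2 K e0 by (intro mult_left_mono) auto
    also have "\<dots> = 1/2" using K e0 by (simp add: field_simps)
    finally show ?thesis by (simp add: algebra_simps)
  qed
  have small2: "2 * K * \<epsilon>^2 \<le> c0 / 4"
  proof -
    have "\<epsilon>^2 \<le> \<epsilon>" using e0 e1 by (simp add: power2_eq_square mult_left_le)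
    also have "\<dots> \<le> c0 / (8 * K)" by (rule e2)
    finally have "2 * K * \<epsilon>^2 \<le> 2 * K * (c0 / (8 * K))" using K
      by (intro mult_left_mono) auto
    also have "\<dots> = c0 / 4" using K by (simp add: field_simps)
    finally show ?thesis .
  qed
  have me: "cmod (stieltjes \<mu> (complex_of_real E + \<i> * complex_of_real \<eta>)) \<le> \<epsilon>"
    using bb[OF eta0 etab] by simp
  have sub: "is_subordination \<mu> t \<omega>" by (rule assms(4))
  have away: "\<eta> \<le> cmod (\<omega> z - complex_of_real E)" if z: "z \<in> upper_half" for z
  proof (rule ccontr)
    assume "\<not> \<eta> \<le> cmod (\<omega> z - complex_of_real E)"
    then have d: "cmod (\<omega> z - complex_of_real E) < \<eta>" by simp
    define w where "w = \<omega> z"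
    have w: "0 < Im w" using sub z unfolding is_subordination_def w_def upper_half_def by auto
    have z0: "0 < Im z" using z by (simp add: upper_half_def)
    have eq: "complex_of_real t * w - z = complex_of_real (t - 1) * F_transform \<mu> w"
      using sub z unfolding is_subordination_def w_def by auto
    have Jw: "c0 \<le> J w" using Jlow[OF w] d eta1 by (simp add: w_def)
    have Jp: "0 < J w" using Jw c0 by simp
    have A: "J w \<le> K * (cmod (stieltjes \<mu> w))^2"
      using sub_ineq[OF assms(2) w z0 eq _ Jp] stj_basic(3)[OF ps sb w] by (simp add: J_def K_def)
    have B: "(cmod (stieltjes \<mu> w))^2 \<le> 2*\<epsilon>^2 + 8*\<eta>*\<epsilon>*J w"
      using key_est[OF ps sb w eta0 me] d by (simp add: J_def w_def)
    have "K * (cmod (stieltjes \<mu> w))^2 \<le> K * (2*\<epsilon>^2 + 8*\<eta>*\<epsilon>*J w)"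
      using B K by simp
    also have "\<dots> = 2 * K * \<epsilon>^2 + (8 * K * \<eta> * \<epsilon>) * J w" by (simp add: algebra_simps)
    also have "\<dots> \<le> c0 / 4 + (1/2) * J w"
    proof -
      have "(8 * K * \<eta> * \<epsilon>) * J w \<le> (1/2) * J w"
        using mult_right_mono[OF small, of "J w"] Jp by simp
      then show ?thesis using small2 by linarith
    qed
    finally have "J w \<le> c0 / 4 + (1/2) * J w" using A by simp
    then show False using Jw c0 by simp
  qed
  show ?thesis
  proof (intro exI[of _ \<eta>] conjI allI impI)
    show "0 < \<eta>" by (rule eta0)
    fix x :: real and L :: complex
    assume lim: "(\<omega> \<longlongrightarrow> L) (at (complex_of_real x) within upper_half)"
    have nb: "at (complex_of_real x) within upper_half \<noteq> bot"
    proof -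
      have "complex_of_real x islimpt upper_half"
        unfolding islimpt_approachable
      proof (intro allI impI)
        fix e :: real assume e: "0 < e"
        show "\<exists>x'\<in>upper_half. x' \<noteq> complex_of_real x \<and> dist x' (complex_of_real x) < e"
        proof (intro bexI[of _ "complex_of_real x + \<i> * complex_of_real (e/2)"] conjI)
          show "complex_of_real x + \<i> * complex_of_real (e/2) \<in> upper_half"
            using e by (simp add: upper_half_def)
          show "complex_of_real x + \<i> * complex_of_real (e/2) \<noteq> complex_of_real x"
            using e by (simp add: complex_eq_iff)
          show "dist (complex_of_real x + \<i> * complex_of_real (e/2)) (complex_of_real x) < e"
            using e by (simp add: dist_norm norm_mult)
        qed
      qed
      then show ?thesis using trivial_limit_within by blast
    qed
    have lim2: "((\<lambda>z. cmod (\<omega> z - complex_of_real E)) \<longlongrightarrow> cmod (L - complex_of_real E))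
                  (at (complex_of_real x) within upper_half)"
      by (intro tendsto_intros lim)
    have ev: "eventually (\<lambda>z. \<eta> \<le> cmod (\<omega> z - complex_of_real E)) (at (complex_of_real x) within upper_half)"
      using away by (simp add: eventually_at_filter)
    show "\<eta> \<le> cmod (L - complex_of_real E)"
      by (rule tendsto_lowerbound[OF lim2 ev nb])
  qed
qed

end
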